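(* Let $n\ge3$ be odd, $M\in\mathcal S^{n\times n}$ distinguished, and $S$ a spin$^c$ set for $M$. If $J_M(U)\ne\emptyset$ for every $U\subseteq S$ with $|U|=3$, then there exists $g\in G_n$ such that $(gM,gS)$ is a spin$^c$ pair in standard form.
   Context: $\mathcal S=\{0,1,2,3\}$ is the Klein four-group ($\mathbb Z_2$-vector space) with $x+x=0$, $1+2=3$, $1+3=2$, $2+3=1$; conjugation is the involution $\bar0=0,\bar1=1,\bar2=3,\bar3=2$. $\mathcal P_n$ is the power set of $\{1,\dots,n\}$ (addition = symmetric difference); $|U|_2=|U|\bmod2$; $J_M(U)=\{j:\sum_{i\in U}M_{ij}=1\}$; $r_i^S(M)=\sum_{j\in S}M_{ij}$. $S$ is a spin$^c$ set for $M$ (and $(M,S)$ a spin$^c$ pair) if $|(J_M(U)+U)\cap S|_2=\binom{|U|}2\bmod 2$ for all $U\in\mathcal P_n$. A square matrix is distinguished if it has $1$ on the diagonal and $2$ or $3$ off it; self-conjugate if $A^t=\overline A$. $G_n=C_2\wr S_n$ acts on $\mathcal S^{n\times n}$ ($k$-th generator of $C_2^n$ conjugates column $k$; $\sigma\in S_n$ acts by $P_\sigma MP_\sigma^{-1}$) and on $\mathcal P_n$ via $G_n\to S_n$. A spin$^c$ pair $(M,S)$ is in standard form if: (i) $S=\{1,\dots,|S|\}$; (ii) the first row of $M$ is $[1,2,\dots,2]$; (iii) $M$ is distinguished with block form $\begin{bmatrix}A&2&*\\2&B&*\\ *&*&*\end{bmatrix}$, diagonal blocks of degrees $k,l,r$,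 the blocks marked $2$ having all entries $2$; (iv) $k\ge l$, $k+l=|S|$; (v) $A,B$ self-conjugate; (vi) $r_1^S(M)=\dots=r_k^S(M)\ne r_{k+1}^S(M)=\dots=r_{k+l}^S(M)$ (possibly $l=0$). *)

theory Defs
  imports "HOL-Combinatorics.Permutations"
begin

text \<open>The Klein four-group S = {0,1,2,3} with 1+2=3, 1+3=2, 2+3=1, x+x=0.\<close>
datatype klein = K0 | K1 | K2 | K3

fun kadd :: "klein \<Rightarrow> klein \<Rightarrow> klein" where
  "kadd K0 y = y"
| "kadd K1 K0 = K1" | "kadd K1 K1 = K0" | "kadd K1 K2 = K3" | "kadd K1 K3 = K2"
| "kadd K2 K0 = K2" | "kadd K2 K1 = K3" | "kadd K2 K2 = K0" | "kadd K2 K3 = K1"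
| "kadd K3 K0 = K3" | "kadd K3 K1 = K2" | "kadd K3 K2 = K1" | "kadd K3 K3 = K0"

instantiation klein :: comm_monoid_add
begin
definition zero_klein_def: "0 = K0"
definition plus_klein_def: "x + y = kadd x y"
instance
proof
  fix a b c :: klein
  show "a + b + c = a + (b + c)" unfolding plus_klein_def
    by (cases a; cases b; cases c) auto
  show "a + b = b + a" unfolding plus_klein_def
    by (cases a; cases b) auto
  show "0 + a = a" unfolding plus_klein_def zero_klein_def by simp
qed
end

fun kconj :: "klein \<Rightarrow> klein" where
  "kconj K0 = K0" | "kconj K1 = K1" | "kconj K2 = K3" | "kconj K3 = K2"

text \<open>n x n matrices over S are functions on indices 1..n (values outside are irrelevant).\<close>
type_synonym kmat = "nat \<Rightarrow> nat \<Rightarrow> klein"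

definition symdiff :: "'a set \<Rightarrow> 'a set \<Rightarrow> 'a set" where
  "symdiff A B = (A - B) \<union> (B - A)"

definition JM :: "nat \<Rightarrow> kmat \<Rightarrow> nat set \<Rightarrow> nat set" where
  "JM n M U = {j \<in> {1..n}. (\<Sum>i\<in>U. M i j) = K1}"

definition row_sum :: "kmat \<Rightarrow> nat set \<Rightarrow> nat \<Rightarrow> klein" where
  "row_sum M S i = (\<Sum>j\<in>S. M i j)"

definition spinc_set :: "nat \<Rightarrow> kmat \<Rightarrow> nat set \<Rightarrow> bool" where
  "spinc_set n M S \<longleftrightarrow> S \<subseteq> {1..n} \<and>
     (\<forall>U. U \<subseteq> {1..n} \<longrightarrow>
        card (symdiff (JM n M U) U \<inter> S) mod 2 = (card U choose 2) mod 2)"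

definition distinguished :: "nat \<Rightarrow> kmat \<Rightarrow> bool" where
  "distinguished n M \<longleftrightarrow> (\<forall>i\<in>{1..n}. M i i = K1) \<and>
     (\<forall>i\<in>{1..n}. \<forall>j\<in>{1..n}. i \<noteq> j \<longrightarrow> M i j \<in> {K2, K3})"

definition self_conj_block :: "kmat \<Rightarrow> nat set \<Rightarrow> bool" where
  "self_conj_block M I \<longleftrightarrow> (\<forall>i\<in>I. \<forall>j\<in>I. M j i = kconj (M i j))"

text \<open>Action of g = (c, sigma) in G_n = C_2 wr S_n: rows/columns permuted by sigma
  (P_sigma M P_sigma^-1), then column j conjugated iff c j; on subsets via sigma.\<close>
definition gact :: "(nat \<Rightarrow> bool) \<Rightarrow> (nat \<Rightarrow> nat) \<Rightarrow> kmat \<Rightarrow> kmat" where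
  "gact c \<sigma> M = (\<lambda>i j. (if c j then kconj else id) (M (inv \<sigma> i) (inv \<sigma> j)))"

definition standard_form :: "nat \<Rightarrow> kmat \<Rightarrow> nat set \<Rightarrow> bool" where
  "standard_form n M S \<longleftrightarrow>
     spinc_set n M S \<and>
     S = {1..card S} \<and>
     M 1 1 = K1 \<and> (\<forall>j\<in>{2..n}. M 1 j = K2) \<and>
     distinguished n M \<and>
     (\<exists>k l. k + l \<le> n \<and> l \<le> k \<and> k + l = card S \<and>
        (\<forall>i\<in>{1..k}. \<forall>j\<in>{k+1..k+l}. M i j = K2 \<and> M j i = K2) \<and>
        self_conj_block M {1..k} \<and> self_conj_block M {k+1..k+l} \<and>
        (\<forall>i\<in>{1..k}. \<forall>j\<in>{1..k}. row_sum M S i = row_sum M S j) \<and>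
        (\<forall>i\<in>{k+1..k+l}. \<forall>j\<in>{k+1..k+l}. row_sum M S i = row_sum M S j) \<and>
        (\<forall>i\<in>{1..k}. \<forall>j\<in>{k+1..k+l}. row_sum M S i \<noteq> row_sum M S j))"

end

theory Submission
  imports Defs
begin

lemma kconj_add: "kconj (x + y) = kconj x + kconj y"
  by (cases x; cases y) (simp_all add: plus_klein_def)

lemma kconj_sum: "kconj (sum g A) = (\<Sum>a\<in>A. kconj (g a))"
  by (induction A rule: infinite_finite_induct) (simp_all add: zero_klein_def kconj_add)

lemma kconj_K1: "kconj x = K1 \<longleftrightarrow> x = K1"
  by (cases x) auto

lemma dist_diag: "distinguished n M \<Longrightarrow> i \<in> {1..n} \<Longrightarrow> M i i = K1"
  by (simp add: distinguished_def)

lemma dist_off: "distinguished n M \<Longrightarrow> i \<in> {1..n} \<Longrightarrow> j \<in> {1..n} \<Longrightarrow> i \<noteq> j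
   \<Longrightarrow> M i j = K2 \<or> M i j = K3"
  unfolding distinguished_def by blast

lemma JM_pair:
  assumes d: "distinguished n M" and ij: "i \<in> {1..n}" "j \<in> {1..n}" "i \<noteq> j"
  shows "JM n M {i,j} = {k\<in>{1..n}. k \<noteq> i \<and> k \<noteq> j \<and> M i k \<noteq> M j k}"
proof -
  have "(M i k + M j k = K1) \<longleftrightarrow> (k \<noteq> i \<and> k \<noteq> j \<and> M i k \<noteq> M j k)" if k: "k \<in> {1..n}" for k
  proof (cases "k = i")
    case True
    then show ?thesis using dist_diag[OF d ij(1)] dist_off[OF d ij(2) ij(1)] ij(3)
      by (auto simp: plus_klein_def)
  next
    case False
    note F = False
    show ?thesis
    proof (cases "k = j")
      case True
      then show ?thesis using dist_diag[OF d ij(2)] dist_off[OF d ij(1) ij(2) ij(3)] ij(3)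
        by (auto simp: plus_klein_def)
    next
      case False
      then show ?thesis using dist_off[OF d ij(1) k] dist_off[OF d ij(2) k] F
        by (auto simp: plus_klein_def)
    qed
  qed
  then show ?thesis using ij(3) by (auto simp: JM_def)
qed

lemma JM_triple:
  assumes d: "distinguished n M" and ijk: "i \<in> {1..n}" "j \<in> {1..n}" "k \<in> {1..n}"
    and dd: "i \<noteq> j" "i \<noteq> k" "j \<noteq> k"
  shows "JM n M {i,j,k} = {m. (m = i \<and> M j i = M k i) \<or> (m = j \<and> M i j = M k j)
                               \<or> (m = k \<and> M i k = M j k)}"
proof -
  have "(m \<in> {1..n} \<and> M i m + (M j m + M k m) = K1) \<longleftrightarrow>
     ((m = i \<and> M j i = M k i) \<or> (m = j \<and> M i j = M k j) \<or> (m = k \<and> M i k = M j k))" for m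
  proof (cases "m \<in> {1..n}")
    case m: True
    consider "m = i" | "m = j" | "m = k" | "m \<noteq> i" "m \<noteq> j" "m \<noteq> k" by blast
    then show ?thesis
    proof cases
      case 1
      then show ?thesis using m dd dist_diag[OF d ijk(1)] dist_off[OF d ijk(2) ijk(1)] dist_off[OF d ijk(3) ijk(1)]
        by (auto simp: plus_klein_def)
    next
      case 2
      then show ?thesis using m dd dist_diag[OF d ijk(2)] dist_off[OF d ijk(1) ijk(2)] dist_off[OF d ijk(3) ijk(2)]
        by (auto simp: plus_klein_def)
    next
      case 3
      then show ?thesis using m dd dist_diag[OF d ijk(3)] dist_off[OF d ijk(1) ijk(3)] dist_off[OF d ijk(2) ijk(3)]
        by (auto simp: plus_klein_def)
    next
      case 4
      then show ?thesis using m dist_off[OF d ijk(1) m] dist_off[OF d ijk(2) m] dist_off[OF d ijk(3) m]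
        by (auto simp: plus_klein_def)
    qed
  next
    case False
    then show ?thesis using ijk by auto
  qed
  then show ?thesis using dd by (auto simp: JM_def)
qed

lemma card3:
  assumes "a \<noteq> b" "a \<noteq> c" "b \<noteq> c"
  shows "card {m. (m = a \<and> P) \<or> (m = b \<and> Q) \<or> (m = c \<and> R)} = of_bool P + of_bool Q + of_bool R"
proof -
  have "{m. (m = a \<and> P) \<or> (m = b \<and> Q) \<or> (m = c \<and> R)} =
     (if P then {a} else {}) \<union> (if Q then {b} else {}) \<union> (if R then {c} else {})" by auto
  then show ?thesis using assms by (cases P; cases Q; cases R) auto
qed

lemma tri_aux:
  assumes "p \<in> {K2,K3}" "q \<in> {K2,K3}" "r \<in> {K2,K3}" "s \<in> {K2,K3}" "t \<in> {K2,K3}" "u \<in> {K2,K3}"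
    and "odd (of_bool (q \<noteq> s) + of_bool (p \<noteq> u) + of_bool (r \<noteq> t) :: nat)"
  shows "((t = K3) \<noteq> ((r = K3) = (s = K3))) \<noteq> ((u = K3) \<noteq> ((p = K3) = (q = K3)))"
  using assms by (auto split: if_splits)

lemma top_exists:
  "finite A \<Longrightarrow> A \<noteq> {} \<Longrightarrow> (\<forall>x\<in>A. \<forall>y\<in>A. x \<noteq> y \<longrightarrow> R x y \<or> R y x) \<Longrightarrow>
    (\<forall>x\<in>A. \<forall>y\<in>A. \<forall>z\<in>A. x \<noteq> y \<longrightarrow> y \<noteq> z \<longrightarrow> x \<noteq> z \<longrightarrow> R x y \<longrightarrow> R y z \<longrightarrow> R x z) \<Longrightarrow>
    (\<exists>m\<in>A. \<forall>k\<in>A. k \<noteq> m \<longrightarrow> R m k)"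
proof (induction A rule: finite_ne_induct)
  case (singleton x)
  show ?case by simp
next
  case (insert x F)
  note tot = insert.prems(1)
  note tr = insert.prems(2)
  have "\<exists>m\<in>F. \<forall>k\<in>F. k \<noteq> m \<longrightarrow> R m k"
  proof (rule insert.IH)
    show "\<forall>a\<in>F. \<forall>b\<in>F. a \<noteq> b \<longrightarrow> R a b \<or> R b a"
      using tot by simp
    show "\<forall>a\<in>F. \<forall>b\<in>F. \<forall>c\<in>F. a \<noteq> b \<longrightarrow> b \<noteq> c \<longrightarrow> a \<noteq> c \<longrightarrow> R a b \<longrightarrow> R b c \<longrightarrow> R a c"
      using tr by simp
  qed
  then obtain m where m: "m \<in> F" "\<And>k. k \<in> F \<Longrightarrow> k \<noteq> m \<Longrightarrow> R m k" by blast
  have xm: "x \<noteq> m" using m(1) insert.hyps(3) by auto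
  show ?case
  proof (cases "R x m")
    case True
    have "R x k" if k: "k \<in> insert x F" "k \<noteq> x" for k
    proof (cases "k = m")
      case True then show ?thesis using \<open>R x m\<close> by simp
    next
      case False
      then have kF: "k \<in> F" and "R m k" using m k by auto
      have "R x m \<longrightarrow> R m k \<longrightarrow> R x k"
        using tr kF m(1) xm False k(2) by simp
      then show ?thesis using \<open>R x m\<close> \<open>R m k\<close> by simp
    qed
    then show ?thesis by (intro bexI[of _ x]) auto
  next
    case False
    then have "R m x" using tot[rule_format, of x m] xm m(1) by simp
    then show ?thesis using m by (intro bexI[of _ m]) auto
  qed
qed
lemma tin: "a \<in> {1..n} \<Longrightarrow> b \<in> {1..n} \<Longrightarrow> (Transposition.transpose a b i \<in> {1..(n::nat)}) = (i \<in> {1..n})"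
  by (auto simp: Transposition.transpose_def)

lemma JM_gact:
  assumes ab: "a \<in> {1..n}" "b \<in> {1..n}"
  shows "JM n (gact c (Transposition.transpose a b) M) U
       = Transposition.transpose a b ` JM n M (Transposition.transpose a b ` U)"
proof -
  let ?t = "Transposition.transpose a b"
  have sumeq: "(\<Sum>i\<in>U. (if c j then kconj else id) (M (?t i) (?t j)))
     = (if c j then kconj else id) (\<Sum>i\<in>?t ` U. M i (?t j))" for j
  proof -
    have "(\<Sum>i\<in>?t ` U. M i (?t j)) = (\<Sum>i\<in>U. M (?t i) (?t j))"
      by (subst sum.reindex) (simp_all add: inj_on_transpose)
    then show ?thesis by (simp add: kconj_sum)
  qed
  have "j \<in> JM n (gact c ?t M) U \<longleftrightarrow> j \<in> ?t ` JM n M (?t ` U)" for j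
  proof -
    have "j \<in> JM n (gact c ?t M) U \<longleftrightarrow> j \<in> {1..n} \<and> (\<Sum>i\<in>U. (if c j then kconj else id) (M (?t i) (?t j))) = K1"
      by (simp add: JM_def gact_def)
    also have "\<dots> \<longleftrightarrow> ?t j \<in> {1..n} \<and> (\<Sum>i\<in>?t ` U. M i (?t j)) = K1"
      using tin[OF ab] by (simp add: sumeq kconj_K1)
    also have "\<dots> \<longleftrightarrow> j \<in> ?t ` JM n M (?t ` U)"
      by (simp add: in_transpose_image_iff JM_def)
    finally show ?thesis .
  qed
  then show ?thesis by blast
qed

lemma symdiff_img: "inj f \<Longrightarrow> symdiff (f ` A) (f ` B) \<inter> f ` C = f ` (symdiff A B \<inter> C)"
  unfolding symdiff_def by (simp add: image_Un image_set_diff image_Int)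

lemma spinc_gact:
  assumes sp: "spinc_set n M S" and ab: "a \<in> {1..n}" "b \<in> {1..n}"
  shows "spinc_set n (gact c (Transposition.transpose a b) M) (Transposition.transpose a b ` S)"
proof -
  let ?t = "Transposition.transpose a b"
  have Ssub: "S \<subseteq> {1..n}" and sp2: "\<And>U. U \<subseteq> {1..n} \<Longrightarrow>
        card (symdiff (JM n M U) U \<inter> S) mod 2 = (card U choose 2) mod 2"
    using sp unfolding spinc_set_def by auto
  have inj: "inj ?t" by (simp add: inj_transpose)
  have "?t ` S \<subseteq> {1..n}" using Ssub tin[OF ab] by auto
  moreover have "card (symdiff (JM n (gact c ?t M) U) U \<inter> ?t ` S) mod 2 = (card U choose 2) mod 2"
    if U: "U \<subseteq> {1..n}" for U
  proof -
    let ?V = "?t ` U"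
    have V: "?V \<subseteq> {1..n}" using U tin[OF ab] by auto
    have UV: "U = ?t ` ?V" by (simp add: image_image)
    have "symdiff (JM n (gact c ?t M) U) U \<inter> ?t ` S = ?t ` (symdiff (JM n M ?V) ?V \<inter> S)"
    proof -
      have "symdiff (JM n (gact c ?t M) U) U \<inter> ?t ` S
          = symdiff (?t ` JM n M ?V) (?t ` ?V) \<inter> ?t ` S"
        using UV JM_gact[OF ab] by metis
      also have "\<dots> = ?t ` (symdiff (JM n M ?V) ?V \<inter> S)"
        by (rule symdiff_img[OF inj])
      finally show ?thesis .
    qed
    then have "card (symdiff (JM n (gact c ?t M) U) U \<inter> ?t ` S) = card (symdiff (JM n M ?V) ?V \<inter> S)"
      by (simp add: card_image)
    moreover have "card U = card ?V" by (simp add: card_image)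
    ultimately show ?thesis using sp2[OF V] by simp
  qed
  ultimately show ?thesis unfolding spinc_set_def by blast
qed
theorem mainTheorem14:
  fixes n :: nat and M :: kmat and S :: "nat set"
  assumes "odd n" and "3 \<le> n"
    and "distinguished n M"
    and "spinc_set n M S"
    and "\<forall>U. U \<subseteq> S \<and> card U = 3 \<longrightarrow> JM n M U \<noteq> {}"
  shows "\<exists>c \<sigma>. \<sigma> permutes {1..n} \<and> standard_form n (gact c \<sigma> M) (\<sigma> ` S)"
proof -
  have dist: "distinguished n M" by fact
  have Ssub: "S \<subseteq> {1..n}" and sp: "\<And>U. U \<subseteq> {1..n} \<Longrightarrow>
        card (symdiff (JM n M U) U \<inter> S) mod 2 = (card U choose 2) mod 2"
    using assms(4) unfolding spinc_set_def by auto
  have hyp: "\<And>U. U \<subseteq> S \<Longrightarrow> card U = 3 \<Longrightarrow> JM n M U \<noteq> {}" using assms(5) by blast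
  have finS: "finite S" using Ssub finite_subset by blast
  have off: "\<And>i j. i \<in> S \<Longrightarrow> j \<in> S \<Longrightarrow> i \<noteq> j \<Longrightarrow> M i j \<in> {K2,K3}"
    using dist_off[OF dist] Ssub by blast
  have Sne: "S \<noteq> {}"
  proof
    assume S0: "S = {}"
    have "{1,2::nat} \<subseteq> {1..n}" using assms(2) by auto
    from sp[OF this] S0 show False by (simp add: choose_two)
  qed
  have "card S < 2"
  proof (rule ccontr)
    assume "\<not> card S < 2"
    then have c2: "2 \<le> card S" by simp
    from Sne obtain v where v: "v \<in> S" by blast
    define c where "c j = (j \<noteq> v \<and> ((M v j = K3) = (M j v = K3)))" for j
    define R where "R i j = ((M i j = K3) \<noteq> c j)" for i j
    have tour: "\<forall>x\<in>S. \<forall>y\<in>S. x \<noteq> y \<longrightarrow> (R x y \<noteq> R y x)"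
    proof (intro ballI impI)
      fix x y assume xy: "x \<in> S" "y \<in> S" "x \<noteq> y"
      show "R x y \<noteq> R y x"
      proof (cases "x = v")
        case True
        then show ?thesis using xy by (auto simp: R_def c_def)
      next
        case xv: False
        show ?thesis
        proof (cases "y = v")
          case True then show ?thesis using xy by (auto simp: R_def c_def)
        next
          case yv: False
          have U: "{v,x,y} \<subseteq> {1..n}" using v xy Ssub by auto
          have J: "JM n M {v,x,y} = {m. (m = v \<and> M x v = M y v) \<or> (m = x \<and> M v x = M y x)
                \<or> (m = y \<and> M v y = M x y)}"
            by (rule JM_triple[OF dist]) (use U xv yv xy(3) in auto)
          have "symdiff (JM n M {v,x,y}) {v,x,y} \<inter> S = {m. (m = v \<and> M x v \<noteq> M y v)
             \<or> (m = x \<and> M v x \<noteq> M y x) \<or> (m = y \<and> M v y \<noteq> M x y)}"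
            unfolding J symdiff_def using v xy xv yv by auto
          moreover have "card {v,x,y} = 3" using xv yv xy(3) by auto
          ultimately have "card {m. (m = v \<and> M x v \<noteq> M y v)
             \<or> (m = x \<and> M v x \<noteq> M y x) \<or> (m = y \<and> M v y \<noteq> M x y)} mod 2 = 1"
            using sp[OF U] by (simp add: choose_two)
          moreover have "card {m. (m = v \<and> M x v \<noteq> M y v)
             \<or> (m = x \<and> M v x \<noteq> M y x) \<or> (m = y \<and> M v y \<noteq> M x y)}
             = of_bool (M x v \<noteq> M y v) + of_bool (M v x \<noteq> M y x) + of_bool (M v y \<noteq> M x y)"
            by (rule card3) (use xv yv xy(3) in auto)
          ultimately have odd: "odd (of_bool (M x v \<noteq> M y v) + of_bool (M v x \<noteq> M y x)
              + of_bool (M v y \<noteq> M x y) :: nat)"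
            by (metis odd_iff_mod_2_eq_one)
          have "((M x y = K3) \<noteq> ((M v y = K3) = (M y v = K3))) \<noteq>
                ((M y x = K3) \<noteq> ((M v x = K3) = (M x v = K3)))"
            by (rule tri_aux[OF _ _ _ _ _ _ odd]) (use off v xy xv yv in auto)
          then show ?thesis using xv yv by (simp add: R_def c_def)
        qed
      qed
    qed
    have trans: "\<forall>x\<in>S. \<forall>y\<in>S. \<forall>z\<in>S. x \<noteq> y \<longrightarrow> y \<noteq> z \<longrightarrow> x \<noteq> z \<longrightarrow> R x y \<longrightarrow> R y z \<longrightarrow> R x z"
    proof (intro ballI impI)
      fix x y z assume xyz: "x \<in> S" "y \<in> S" "z \<in> S" "x \<noteq> y" "y \<noteq> z" "x \<noteq> z" "R x y" "R y z"
      show "R x z"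
      proof (rule ccontr)
        assume nxz: "\<not> R x z"
        have Rzx: "R z x" using tour xyz nxz by metis
        have Ryx: "\<not> R y x" using tour xyz by metis
        have Rzy: "\<not> R z y" using tour xyz by metis
        have "{x,y,z} \<subseteq> S" "card {x,y,z} = 3" using xyz by auto
        then have "JM n M {x,y,z} \<noteq> {}" by (rule hyp)
        moreover have "JM n M {x,y,z} = {m. (m = x \<and> M y x = M z x) \<or> (m = y \<and> M x y = M z y)
           \<or> (m = z \<and> M x z = M y z)}"
          by (rule JM_triple[OF dist]) (use xyz Ssub in auto)
        ultimately have "M y x = M z x \<or> M x y = M z y \<or> M x z = M y z" by auto
        then show False using Rzx Ryx Rzy \<open>R x y\<close> \<open>R y z\<close> nxz unfolding R_def by auto
      qed
    qed
    have tot: "\<forall>x\<in>S. \<forall>y\<in>S. x \<noteq> y \<longrightarrow> R x y \<or> R y x" using tour by blast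
    obtain m1 where m1: "m1 \<in> S" "\<forall>k\<in>S. k \<noteq> m1 \<longrightarrow> R m1 k"
      using top_exists[OF finS Sne tot trans] by blast
    have ne: "S - {m1} \<noteq> {}"
    proof
      assume "S - {m1} = {}"
      then have "S = {m1}" using m1(1) by blast
      then show False using c2 by simp
    qed
    have tot2: "\<forall>x\<in>S-{m1}. \<forall>y\<in>S-{m1}. x \<noteq> y \<longrightarrow> R x y \<or> R y x" using tot by blast
    have trans2: "\<forall>x\<in>S-{m1}. \<forall>y\<in>S-{m1}. \<forall>z\<in>S-{m1}. x \<noteq> y \<longrightarrow> y \<noteq> z \<longrightarrow> x \<noteq> z \<longrightarrow> R x y \<longrightarrow> R y z \<longrightarrow> R x z"
      using trans by blast
    obtain m2 where m2: "m2 \<in> S - {m1}" "\<forall>k\<in>S - {m1}. k \<noteq> m2 \<longrightarrow> R m2 k"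
      using top_exists[OF _ ne tot2 trans2] finS by blast
    have m12: "m1 \<noteq> m2" "m2 \<in> S" using m2(1) by auto
    have eq: "M m1 k = M m2 k" if k: "k \<in> S" "k \<noteq> m1" "k \<noteq> m2" for k
    proof -
      have "R m1 k" "R m2 k" using m1 m2 k by auto
      then have "(M m1 k = K3) = (M m2 k = K3)" unfolding R_def by auto
      moreover have "M m1 k \<in> {K2,K3}" "M m2 k \<in> {K2,K3}" using off m1(1) m12 k by auto
      ultimately show ?thesis by auto
    qed
    have U: "{m1,m2} \<subseteq> {1..n}" using m1(1) m12 Ssub by auto
    have J: "JM n M {m1,m2} = {k\<in>{1..n}. k \<noteq> m1 \<and> k \<noteq> m2 \<and> M m1 k \<noteq> M m2 k}"
      by (rule JM_pair[OF dist]) (use U m12 in auto)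
    have "symdiff (JM n M {m1,m2}) {m1,m2} \<inter> S = {m1,m2}"
      unfolding J symdiff_def using eq m1(1) m12 by auto
    then show False using sp[OF U] m12 by (simp add: choose_two)
  qed
  then have "card S = 1" using Sne finS by (simp add: card_gt_0_iff less_2_cases_iff)
  then obtain x where Sx: "S = {x}" by (rule card_1_singletonE)
  have x: "x \<in> {1..n}" using Sx Ssub by auto
  have one: "(1::nat) \<in> {1..n}" using assms(2) by auto
  define t where "t = Transposition.transpose x 1"
  define c' where "c' j = (j \<noteq> 1 \<and> M x (t j) = K3)" for j
  define G where "G = gact c' t M"
  have tS: "t ` S = {1}" unfolding Sx t_def by simp
  have Gij: "G i j = (if c' j then kconj else id) (M (t i) (t j))" for i j
    unfolding G_def gact_def t_def by simp
  have tin': "t i \<in> {1..n} \<longleftrightarrow> i \<in> {1..n}" for i unfolding t_def using tin[OF x one] .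
  have tinj: "t i = t j \<longleftrightarrow> i = j" for i j unfolding t_def by (auto simp: transpose_eq_iff)
  have t1: "t 1 = x" unfolding t_def by simp
  have G11: "G 1 1 = K1" using Gij[of 1 1] t1 dist_diag[OF dist x] by (simp add: c'_def)
  have Grow: "G 1 j = K2" if j: "j \<in> {2..n}" for j
  proof -
    have j1: "j \<in> {1..n}" "j \<noteq> 1" using j by auto
    have "t j \<noteq> x" using tinj[of j 1] t1 j1 by simp
    then have "M x (t j) = K2 \<or> M x (t j) = K3" using dist_off[OF dist x] tin' j1 by auto
    then show ?thesis using Gij[of 1 j] t1 j1 by (auto simp: c'_def)
  qed
  have Gdist: "distinguished n G"
    unfolding distinguished_def
  proof (intro conjI ballI impI)
    fix i assume i: "i \<in> {1..n}"
    show "G i i = K1" using Gij[of i i] dist_diag[OF dist, of "t i"] tin' i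
      by (cases "c' i") auto
  next
    fix i j assume ij: "i \<in> {1..n}" "j \<in> {1..n}" "i \<noteq> j"
    then have "M (t i) (t j) = K2 \<or> M (t i) (t j) = K3"
      using dist_off[OF dist, of "t i" "t j"] tin' tinj by auto
    then show "G i j \<in> {K2, K3}" using Gij[of i j] by (cases "c' j") auto
  qed
  have "standard_form n G {1}"
    unfolding standard_form_def
  proof (intro conjI)
    show "spinc_set n G {1}"
      using spinc_gact[OF assms(4) x one, of c'] tS unfolding G_def t_def by simp
    show "{1::nat} = {1..card {1::nat}}" by simp
    show "G 1 1 = K1" by (rule G11)
    show "\<forall>j\<in>{2..n}. G 1 j = K2" using Grow by blast
    show "distinguished n G" by (rule Gdist)
    show "\<exists>k l. k + l \<le> n \<and> l \<le> k \<and> k + l = card {1::nat} \<and>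
        (\<forall>i\<in>{1..k}. \<forall>j\<in>{k+1..k+l}. G i j = K2 \<and> G j i = K2) \<and>
        self_conj_block G {1..k} \<and> self_conj_block G {k+1..k+l} \<and>
        (\<forall>i\<in>{1..k}. \<forall>j\<in>{1..k}. row_sum G {1} i = row_sum G {1} j) \<and>
        (\<forall>i\<in>{k+1..k+l}. \<forall>j\<in>{k+1..k+l}. row_sum G {1} i = row_sum G {1} j) \<and>
        (\<forall>i\<in>{1..k}. \<forall>j\<in>{k+1..k+l}. row_sum G {1} i \<noteq> row_sum G {1} j)"
      apply (rule exI[of _ 1], rule exI[of _ 0])
      using one G11 by (simp add: self_conj_block_def)
  qed
  moreover have "t permutes {1..n}" unfolding t_def by (rule permutes_swap_id[OF x one])
  ultimately have "t permutes {1..n} \<and> standard_form n (gact c' t M) (t ` S)"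
    using tS unfolding G_def by simp
  then show ?thesis by blast
qed
end
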